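(* Let $N\ge1$ and $n\ge1$, and let $\mathbf A_1,\dots,\mathbf A_N$ be real $n\times n$ matrices with $\|\mathbf A_i\|_\infty\le 1/4$ for all $i$. Suppose that the Gauss differentiation matrix $\mathbf D_{1:N}$ is invertible with $\|\mathbf D_{1:N}^{-1}\|_\infty\le2$. Then for each $\mathbf q\in\mathbb R^n$ and $\mathbf p=(\mathbf p_1,\dots,\mathbf p_N)\in\mathbb R^{nN}$ with $\mathbf p_i\in\mathbb R^n$, the linear system $$\sum_{j=1}^ND_{ij}\mathbf X_j-\mathbf A_i\mathbf X_i=\mathbf p_i\ (1\le i\le N),\qquad \mathbf X_{N+1}-\sum_{j=1}^N\omega_j\mathbf A_j\mathbf X_j=\mathbf q$$ has a unique solution $\mathbf X_j\in\mathbb R^n$, $1\le j\le N+1$, and this solution satisfies $\|\mathbf X_j\|_\infty\le 4\|\mathbf p\|_\infty+\|\mathbf q\|_\infty$ for $1\le j\le N+1$.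
   Context: $-1<\tau_1<\dots<\tau_N<1$ are the $N$ Gauss quadrature abscissas (roots of the degree-$N$ Legendre polynomial), $\omega_1,\dots,\omega_N>0$ the Gauss weights (summing to 2), $\tau_0=-1$. $D_{ij}=\dot L_j(\tau_i)$ for $1\le i\le N$, $0\le j\le N$, where $L_j(\tau)=\prod_{k=0,k\ne j}^N\frac{\tau-\tau_k}{\tau_j-\tau_k}$; $\mathbf D_{1:N}=(D_{ij})_{1\le i,j\le N}$. For a vector, $\|\cdot\|_\infty$ is the maximum absolute entry; for a matrix it is the largest absolute row sum (the induced norm). *)

theory Defs
  imports "HOL-Analysis.Analysis" "HOL-Computational_Algebra.Polynomial"
begin

text \<open>Legendre polynomials via Bonnet's recurrence
  (n+1) P_(n+1) = (2n+1) x P_n - n P_(n-1).\<close>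
fun legendre :: "nat \<Rightarrow> real poly" where
  "legendre 0 = 1"
| "legendre (Suc 0) = [:0, 1:]"
| "legendre (Suc (Suc n)) =
     smult (1 / (real n + 2))
       (smult (2 * real n + 3) ([:0, 1:] * legendre (Suc n)) - smult (real n + 1) (legendre n))"

definition gauss_node :: "nat \<Rightarrow> nat \<Rightarrow> real" where
  "gauss_node N i = (if i = 0 then -1
      else sorted_list_of_set {x. poly (legendre N) x = 0} ! (i - 1))"

definition gauss_weight :: "nat \<Rightarrow> nat \<Rightarrow> real" where
  "gauss_weight N j = integral {-1..1}
     (\<lambda>t. \<Prod>k\<in>{1..N} - {j}. (t - gauss_node N k) / (gauss_node N j - gauss_node N k))"

definition lagrange_basis :: "nat \<Rightarrow> nat \<Rightarrow> real \<Rightarrow> real" where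
  "lagrange_basis N j t = (\<Prod>k\<in>{0..N} - {j}. (t - gauss_node N k) / (gauss_node N j - gauss_node N k))"

definition gauss_diff :: "nat \<Rightarrow> nat \<Rightarrow> nat \<Rightarrow> real" where
  "gauss_diff N i j = deriv (lagrange_basis N j) (gauss_node N i)"

text \<open>Infinity norms. Vectors in R^n are functions on {0..<n}; an m x m matrix indexed by a finite set I.\<close>
definition vec_inf_norm :: "nat \<Rightarrow> (nat \<Rightarrow> real) \<Rightarrow> real" where
  "vec_inf_norm n v = Max ((\<lambda>r. \<bar>v r\<bar>) ` {..<n})"

definition mat_inf_norm :: "nat set \<Rightarrow> (nat \<Rightarrow> nat \<Rightarrow> real) \<Rightarrow> real" where
  "mat_inf_norm I M = Max ((\<lambda>r. \<Sum>c\<in>I. \<bar>M r c\<bar>) ` I)"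

end

theory Submission
  imports Defs
begin


lemma xmult: "[:0, 1:] * p = pCons 0 (p::real poly)"
  by (simp add: mult_pCons_left)

lemma leg_rec': "smult (real n + 2) (legendre (Suc (Suc n))) =
       smult (2 * real n + 3) (pCons 0 (legendre (Suc n))) - smult (real n + 1) (legendre n)"
  by (simp add: xmult)

lemma leg_eval: "poly (legendre (Suc (Suc n))) x =
   ((2 * real n + 3) * x * poly (legendre (Suc n)) x - (real n + 1) * poly (legendre n) x) / (real n + 2)"
  by (simp add: xmult field_simps)

lemma leg_one: "poly (legendre n) 1 = 1"
proof (induction n rule: legendre.induct)
  case (3 n) then show ?case by (simp only: leg_eval) (simp add: field_simps)
qed auto

lemma leg_par: "poly (legendre n) (-x) = (-1)^n * poly (legendre n) x"
proof (induction n rule: legendre.induct)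
  case (3 n) then show ?case by (simp only: leg_eval) (simp add: algebra_simps)
qed auto

lemma leg_coeff: "coeff (legendre n) n > 0 \<and> (\<forall>k>n. coeff (legendre n) k = 0)"
proof (induction n rule: legendre.induct)
  case 1 then show ?case by auto
next
  case 2 then show ?case by (auto simp: coeff_pCons split: nat.splits)
next
  case (3 n)
  have c: "coeff (legendre (Suc (Suc n))) k = ((2 * real n + 3) * (case k of 0 \<Rightarrow> 0 | Suc m \<Rightarrow> coeff (legendre (Suc n)) m)
        - (real n + 1) * coeff (legendre n) k) / (real n + 2)" for k
    by (cases k) (simp_all add: xmult field_simps)
  show ?case
  proof
    show "coeff (legendre (Suc (Suc n))) (Suc (Suc n)) > 0"
      using 3 by (simp only: c) (auto intro!: divide_pos_pos)
    show "\<forall>k>Suc (Suc n). coeff (legendre (Suc (Suc n))) k = 0"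
    proof (intro allI impI)
      fix k assume k: "k > Suc (Suc n)"
      then obtain m where m: "k = Suc m" "m > Suc n" by (cases k) auto
      show "coeff (legendre (Suc (Suc n))) k = 0"
        using 3 k m by (simp only: c) auto
    qed
  qed
qed

lemma leg_degree: "degree (legendre n) = n"
  using leg_coeff[of n]
  by (metis degree_le le_degree less_irrefl nle_le order_le_less)

lemma leg_nz: "legendre n \<noteq> 0"
  using leg_coeff[of n] by auto

lemma leg_deval: "(real n + 2) * poly (pderiv (legendre (Suc (Suc n)))) x =
   (2 * real n + 3) * (poly (legendre (Suc n)) x + x * poly (pderiv (legendre (Suc n))) x)
   - (real n + 1) * poly (pderiv (legendre n)) x"
proof -
  have "pderiv (smult (real n + 2) (legendre (Suc (Suc n)))) =
     pderiv (smult (2 * real n + 3) (pCons 0 (legendre (Suc n))) - smult (real n + 1) (legendre n))"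
    by (simp only: leg_rec')
  then have "poly (pderiv (smult (real n + 2) (legendre (Suc (Suc n))))) x =
     poly (pderiv (smult (2 * real n + 3) (pCons 0 (legendre (Suc n))) - smult (real n + 1) (legendre n))) x"
    by simp
  then show ?thesis by (simp add: pderiv_smult pderiv_diff pderiv_pCons algebra_simps del: legendre.simps)
qed

lemma leg_dids: "x * poly (pderiv (legendre (Suc n))) x - poly (pderiv (legendre n)) x
      = (real n + 1) * poly (legendre (Suc n)) x
  \<and> poly (pderiv (legendre (Suc n))) x - x * poly (pderiv (legendre n)) x
      = (real n + 1) * poly (legendre n) x"
proof (induction n)
  case 0 then show ?case by (simp add: pderiv_pCons)
next
  case (Suc n)
  define v0 where "v0 = poly (legendre n) x"
  define v1 where "v1 = poly (legendre (Suc n)) x"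
  define v2 where "v2 = poly (legendre (Suc (Suc n))) x"
  define d0 where "d0 = poly (pderiv (legendre n)) x"
  define d1 where "d1 = poly (pderiv (legendre (Suc n))) x"
  define d2 where "d2 = poly (pderiv (legendre (Suc (Suc n)))) x"
  have I1: "x * d1 - d0 = (real n + 1) * v1" and I2: "d1 - x * d0 = (real n + 1) * v0"
    using Suc unfolding v0_def v1_def d0_def d1_def by auto
  have R: "(real n + 2) * v2 = (2 * real n + 3) * x * v1 - (real n + 1) * v0"
    unfolding v2_def v1_def v0_def leg_eval by (simp add: field_simps)
  have RD: "(real n + 2) * d2 = (2 * real n + 3) * (v1 + x * d1) - (real n + 1) * d0"
    unfolding d2_def v1_def d1_def d0_def by (rule leg_deval)
  have "(real n + 2) * (d2 - x * d1) = (2 * real n + 3) * v1 + (real n + 1) * (x * d1 - d0)"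
    using RD by (simp add: algebra_simps)
  also have "\<dots> = (real n + 2) * ((real n + 2) * v1)" using I1 by (simp add: algebra_simps)
  finally have J2: "d2 - x * d1 = (real n + 2) * v1" by simp
  have I3: "(x * x - 1) * d1 = (real n + 1) * (x * v1 - v0)"
  proof -
    have "(x * x - 1) * d1 = x * (x * d1 - d0) - (d1 - x * d0)" by (simp add: algebra_simps)
    also have "\<dots> = x * ((real n + 1) * v1) - (real n + 1) * v0" by (simp only: I1 I2)
    also have "\<dots> = (real n + 1) * (x * v1 - v0)" by (simp add: algebra_simps)
    finally show ?thesis .
  qed
  have "(real n + 2) * (x * d2 - d1) = (real n + 2) * (x * (x * d1 + (real n + 2) * v1) - d1)"
    using J2 by (simp add: algebra_simps)
  also have "\<dots> = (real n + 2) * ((x * x - 1) * d1 + (real n + 2) * x * v1)" by (simp add: algebra_simps)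
  also have "\<dots> = (real n + 2) * ((real n + 1) * (x * v1 - v0) + (real n + 2) * x * v1)" by (simp only: I3)
  also have "\<dots> = (real n + 2) * ((2 * real n + 3) * x * v1 - (real n + 1) * v0)" by (simp add: algebra_simps)
  also have "\<dots> = (real n + 2) * ((real n + 2) * v2)" by (simp only: R)
  finally have J1: "x * d2 - d1 = (real n + 2) * v2" by simp
  show ?case using J1 J2 unfolding v0_def v1_def v2_def d0_def d1_def d2_def by (simp add: algebra_simps del: legendre.simps)
qed

definition Wp :: "real poly" where "Wp = [:-1, 0, 1:]"

lemma leg_I3: "Wp * pderiv (legendre (Suc n)) = smult (real n + 1) (pCons 0 (legendre (Suc n)) - legendre n)"
proof -
  have "poly (Wp * pderiv (legendre (Suc n))) x = poly (smult (real n + 1) (pCons 0 (legendre (Suc n)) - legendre n)) x" for x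
  proof -
    have "x * (x * poly (pderiv (legendre (Suc n))) x - poly (pderiv (legendre n)) x)
       - (poly (pderiv (legendre (Suc n))) x - x * poly (pderiv (legendre n)) x)
      = (x * x - 1) * poly (pderiv (legendre (Suc n))) x" by (simp add: algebra_simps)
    then show ?thesis using leg_dids[of x n] by (simp add: Wp_def algebra_simps)
  qed
  then show ?thesis by (simp add: poly_eq_poly_eq_iff[symmetric] fun_eq_iff)
qed

lemma leg_ode: "pderiv (Wp * pderiv (legendre m)) = smult (real m * (real m + 1)) (legendre m)"
proof (cases m)
  case 0 then show ?thesis by (simp add: pderiv_pCons)
next
  case (Suc n)
  have "poly (pderiv (Wp * pderiv (legendre m))) x = poly (smult (real m * (real m + 1)) (legendre m)) x" for x
  proof -
    have e: "x * poly (pderiv (legendre (Suc n))) x - poly (pderiv (legendre n)) x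
      = (real n + 1) * poly (legendre (Suc n)) x" using leg_dids[of x n] by blast
    have "poly (pderiv (Wp * pderiv (legendre m))) x = (real n + 1) * (poly (legendre (Suc n)) x
        + (x * poly (pderiv (legendre (Suc n))) x - poly (pderiv (legendre n)) x))"
      unfolding Suc leg_I3 by (simp add: pderiv_smult pderiv_diff pderiv_pCons algebra_simps del: legendre.simps)
    then show ?thesis unfolding e using Suc by (simp add: algebra_simps del: legendre.simps)
  qed
  then show ?thesis by (simp add: poly_eq_poly_eq_iff[symmetric] fun_eq_iff)
qed


definition J :: "real poly \<Rightarrow> real" where "J p = integral {-1..1} (poly p)"

lemma poly_int: "poly p integrable_on {-1..(1::real)}"
  by (intro integrable_continuous_interval continuous_intros)

lemma J_add: "J (p + q) = J p + J q"
proof -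
  have "poly (p + q) = (\<lambda>x. poly p x + poly q x)" by (simp add: fun_eq_iff)
  then show ?thesis unfolding J_def using poly_int[of p] poly_int[of q]
    by (simp add: integral_add)
qed

lemma J_diff: "J (p - q) = J p - J q"
proof -
  have "poly (p - q) = (\<lambda>x. poly p x - poly q x)" by (simp add: fun_eq_iff)
  then show ?thesis unfolding J_def using poly_int[of p] poly_int[of q]
    by (simp add: integral_diff)
qed

lemma J_smult: "J (smult c p) = c * J p"
proof -
  have "poly (smult c p) = (\<lambda>x. c *\<^sub>R poly p x)" by (simp add: fun_eq_iff)
  then show ?thesis unfolding J_def by simp
qed

lemma J_0: "J 0 = 0"
proof -
  have "poly 0 = (\<lambda>x::real. 0)" by (simp add: fun_eq_iff)
  then show ?thesis unfolding J_def by simp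
qed

lemma J_1: "J 1 = 2"
proof -
  have "poly 1 = (\<lambda>x::real. 1)" by (simp add: fun_eq_iff)
  then show ?thesis unfolding J_def by simp
qed

lemma J_sum: "finite A \<Longrightarrow> J (\<Sum>a\<in>A. f a) = (\<Sum>a\<in>A. J (f a))"
  by (induction A rule: finite_induct) (auto simp: J_0 J_add)

lemma J_pderiv: "J (pderiv f) = poly f 1 - poly f (-1)"
proof -
  have "((poly (pderiv f)) has_integral (poly f 1 - poly f (-1))) {-1..1}"
    by (rule fundamental_theorem_of_calculus)
      (auto intro!: DERIV_subset[OF poly_DERIV] simp: has_real_derivative_iff_has_vector_derivative[symmetric])
  then show ?thesis unfolding J_def by (rule integral_unique)
qed

lemma J_nonneg: "(\<And>x. x \<in> {-1..1} \<Longrightarrow> poly p x \<ge> 0) \<Longrightarrow> J p \<ge> 0"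
  unfolding J_def by (rule integral_nonneg[OF poly_int])

lemma J_zero: "(\<And>x. x \<in> {-1..1} \<Longrightarrow> poly p x \<ge> 0) \<Longrightarrow> J p = 0 \<Longrightarrow> p = 0"
proof -
  assume nn: "\<And>x. x \<in> {-1..1} \<Longrightarrow> poly p x \<ge> 0" and j: "J p = 0"
  have "\<forall>x\<in>{-1..1}. poly p x = 0"
  proof -
    have c: "continuous_on {-1..1} (poly p)" by (intro continuous_intros)
    show ?thesis using integral_eq_0_iff[OF c, of] nn j unfolding J_def by auto
  qed
  then have "{-1..1::real} \<subseteq> {x. poly p x = 0}" by auto
  moreover have "infinite {-1..1::real}" by simp
  ultimately show "p = 0" using poly_roots_finite[of p] infinite_super by blast
qed


lemma J_ibp: "J (pderiv (Wp * Q) * R) = - J (Wp * Q * pderiv R)"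
proof -
  have "J (pderiv (Wp * Q * R)) = 0" by (simp add: J_pderiv Wp_def)
  moreover have "pderiv (Wp * Q * R) = pderiv (Wp * Q) * R + Wp * Q * pderiv R"
    by (simp add: pderiv_mult)
  ultimately show ?thesis by (simp add: J_add)
qed

lemma leg_orth: "n \<noteq> m \<Longrightarrow> J (legendre n * legendre m) = 0"
proof -
  assume nm: "n \<noteq> m"
  have a: "real n * (real n + 1) * J (legendre n * legendre m) = - J (Wp * pderiv (legendre n) * pderiv (legendre m))"
    using J_ibp[of "pderiv (legendre n)" "legendre m"] by (simp add: leg_ode J_smult)
  have b: "real m * (real m + 1) * J (legendre m * legendre n) = - J (Wp * pderiv (legendre m) * pderiv (legendre n))"
    using J_ibp[of "pderiv (legendre m)" "legendre n"] by (simp add: leg_ode J_smult)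
  have c1: "Wp * pderiv (legendre n) * pderiv (legendre m) = Wp * pderiv (legendre m) * pderiv (legendre n)"
    by (simp add: mult_ac)
  have c2: "legendre m * legendre n = legendre n * legendre m" by (rule mult.commute)
  have "real n * (real n + 1) * J (legendre n * legendre m) = real m * (real m + 1) * J (legendre n * legendre m)"
    using a b unfolding c1 c2 by simp
  then have eq: "(real n * (real n + 1) - real m * (real m + 1)) * J (legendre n * legendre m) = 0"
    by (simp add: left_diff_distrib)
  have "real n * (real n + 1) \<noteq> real m * (real m + 1)"
  proof
    assume h: "real n * (real n + 1) = real m * (real m + 1)"
    show False
    proof (cases "n < m")
      case True
      then have "real n < real m" by simp
      then have "real n * (real n + 1) < real m * (real m + 1)"
        by (intro mult_strict_mono) auto
      then show False using h by simp
    next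
      case False
      then have "real m < real n" using nm by simp
      then have "real m * (real m + 1) < real n * (real n + 1)"
        by (intro mult_strict_mono) auto
      then show False using h by simp
    qed
  qed
  then show ?thesis using eq by simp
qed

lemma leg_orth_deg: "degree q < n \<Longrightarrow> J (legendre n * q) = 0"
proof -
  have "\<forall>q. degree q \<le> d \<longrightarrow> d < n \<longrightarrow> J (legendre n * q) = 0" for d
  proof (induction d)
    case 0
    show ?case
    proof (intro allI impI)
      fix q :: "real poly" assume "degree q \<le> 0" "0 < n"
      then have "[:coeff q 0:] = q" using degree_0_id[of q] by simp
      then have "q = [:coeff q 0:]" by simp
      then have "legendre n * q = smult (coeff q 0) (legendre n * legendre 0)"
        by (metis mult.right_neutral legendre.simps(1) mult_pCons_right mult_zero_right pCons_0_0 smult_0_right add.right_neutral)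
      moreover have "J (legendre n * legendre 0) = 0" using \<open>0 < n\<close> by (intro leg_orth) auto
      ultimately show "J (legendre n * q) = 0" by (simp add: J_smult)
    qed
  next
    case (Suc d)
    show ?case
    proof (intro allI impI)
      fix q :: "real poly" assume q: "degree q \<le> Suc d" "Suc d < n"
      define c where "c = coeff q (Suc d) / coeff (legendre (Suc d)) (Suc d)"
      define q' where "q' = q - smult c (legendre (Suc d))"
      have pos: "coeff (legendre (Suc d)) (Suc d) > 0" using leg_coeff by blast
      have "degree q' \<le> Suc d" unfolding q'_def using q leg_degree[of "Suc d"]
        by (metis degree_diff_le degree_smult_le le_trans)
      moreover have "coeff q' (Suc d) = 0" unfolding q'_def c_def using pos by simp
      ultimately have dq': "degree q' \<le> d"
      proof -
        assume a: "degree q' \<le> Suc d" and b: "coeff q' (Suc d) = 0"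
        show ?thesis
        proof (rule ccontr)
          assume "\<not> degree q' \<le> d"
          then have "degree q' = Suc d" using a by simp
          then have "q' \<noteq> 0" by auto
          then have "coeff q' (degree q') \<noteq> 0" by simp
          then show False using b \<open>degree q' = Suc d\<close> by simp
        qed
      qed
      have "J (legendre n * q') = 0" using Suc.IH dq' q by auto
      moreover have "J (legendre n * legendre (Suc d)) = 0" using q by (intro leg_orth) auto
      moreover have "q = q' + smult c (legendre (Suc d))" unfolding q'_def by simp
      ultimately show "J (legendre n * q) = 0"
        by (simp add: distrib_left J_add J_smult)
    qed
  qed
  then show "degree q < n \<Longrightarrow> J (legendre n * q) = 0" by blast
qed


lemma decomp_roots:
  fixes p :: "real poly"
  assumes "finite Z" "p \<noteq> 0"
  shows "\<exists>R. p = (\<Prod>z\<in>Z. [:-z,1:]^order z p) * R \<and> (\<forall>z\<in>Z. poly R z \<noteq> 0)"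
  using assms(1)
proof (induction Z rule: finite_induct)
  case empty then show ?case by auto
next
  case (insert a Z)
  then obtain R where R: "p = (\<Prod>z\<in>Z. [:-z,1:]^order z p) * R" "\<forall>z\<in>Z. poly R z \<noteq> 0" by blast
  define Q where "Q = (\<Prod>z\<in>Z. [:-z,1:]^order z p)"
  have pQR: "p = Q * R" using R Q_def by simp
  have Rnz: "R \<noteq> 0" using pQR assms(2) by auto
  have "poly Q a \<noteq> 0" unfolding Q_def poly_prod using insert(2) by (auto simp: prod_zero_iff insert(1))
  then have oQ: "order a Q = 0" by (simp add: order_root)
  have oa: "order a p = order a R" using pQR assms(2) oQ by (simp add: order_mult)
  obtain R' where R': "R = [:-a,1:]^order a R * R'" "\<not> [:-a,1:] dvd R'"
    using order_decomp[OF Rnz] by blast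
  have "poly R' a \<noteq> 0" using R'(2) by (simp add: poly_eq_0_iff_dvd)
  moreover have "\<forall>z\<in>Z. poly R' z \<noteq> 0" using R(2) R'(1)
    by (metis mult_zero_right poly_mult)
  moreover have "p = (\<Prod>z\<in>insert a Z. [:-z,1:]^order z p) * R'"
  proof -
    have e: "p = Q * ([:-a,1:]^order a p * R')" using pQR R'(1) oa by metis
    have "(\<Prod>z\<in>insert a Z. [:-z,1:]^order z p) = [:-a,1:]^order a p * Q"
      unfolding Q_def using insert(1,2) by simp
    then show ?thesis using e by (simp add: mult_ac)
  qed
  ultimately show ?case by auto
qed

lemma leg_roots:
  "card {x. poly (legendre N) x = 0} = N \<and> (\<forall>x. poly (legendre N) x = 0 \<longrightarrow> -1 < x \<and> x < 1)"
proof -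
  define P where "P = legendre N"
  have Pnz: "P \<noteq> 0" unfolding P_def by (rule leg_nz)
  define Rt where "Rt = {x. poly P x = 0}"
  define Z where "Z = {x. poly P x = 0 \<and> -1 < x \<and> x < 1}"
  have fRt: "finite Rt" unfolding Rt_def using Pnz by (rule poly_roots_finite)
  have ZRt: "Z \<subseteq> Rt" unfolding Z_def Rt_def by auto
  have fZ: "finite Z" using fRt ZRt finite_subset by blast
  have cRt: "card Rt \<le> N" unfolding Rt_def using card_poly_roots_bound[OF Pnz] leg_degree P_def by simp
  have P1: "poly P 1 \<noteq> 0" "poly P (-1) \<noteq> 0"
    unfolding P_def using leg_one leg_par[of N 1] by auto
  have cZ: "card Z \<ge> N"
  proof (rule ccontr)
    assume "\<not> card Z \<ge> N"
    then have cZN: "card Z < N" by simp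
    obtain R where R: "P = (\<Prod>z\<in>Z. [:-z,1:]^order z P) * R" "\<forall>z\<in>Z. poly R z \<noteq> 0"
      using decomp_roots[OF fZ Pnz] by blast
    define s where "s = (\<Prod>z\<in>Z. [:-z,1:]^(order z P mod 2))"
    have "degree s \<le> (\<Sum>z\<in>Z. degree ([:-z,1:]^(order z P mod 2)))"
      unfolding s_def using degree_prod_sum_le[OF fZ] by (simp add: o_def)
    also have "\<dots> \<le> (\<Sum>z\<in>Z. 1)"
      by (intro sum_mono) (simp add: degree_linear_power)
    finally have "degree s < N" using cZN by simp
    then have J0: "J (P * s) = 0" unfolding P_def by (rule leg_orth_deg)
    have snz: "s \<noteq> 0" unfolding s_def by (simp add: fZ)
    have Psnz: "P * s \<noteq> 0" using snz Pnz by simp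
    have Ps: "poly (P * s) x = (\<Prod>z\<in>Z. (x - z)^(order z P + order z P mod 2)) * poly R x" for x
    proof -
      have "poly (P * s) x = (\<Prod>z\<in>Z. (x - z)^order z P) * poly R x * (\<Prod>z\<in>Z. (x - z)^(order z P mod 2))"
        by (subst R(1)) (simp add: s_def poly_prod)
      also have "\<dots> = (\<Prod>z\<in>Z. (x - z)^(order z P) * (x - z)^(order z P mod 2)) * poly R x"
        by (simp add: prod.distrib mult_ac)
      finally show ?thesis by (simp add: power_add)
    qed
    have sq: "(\<Prod>z\<in>Z. (x - z)^(order z P + order z P mod 2)) \<ge> 0" for x
      by (intro prod_nonneg) (auto intro!: zero_le_even_power)
    have Rnz: "poly R x \<noteq> 0" if "x \<in> {-1..1}" for x
    proof
      assume Rx: "poly R x = 0"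
      then have "poly P x = 0" by (subst R(1)) simp
      moreover have "x \<noteq> 1" "x \<noteq> -1" using P1 \<open>poly P x = 0\<close> by auto
      ultimately have "x \<in> Z" using that unfolding Z_def by auto
      then show False using R(2) Rx by auto
    qed
    have sign: "(\<forall>x\<in>{-1..1}. poly R x > 0) \<or> (\<forall>x\<in>{-1..1}. poly R x < 0)"
    proof (cases "poly R 1 > 0")
      case True
      have "poly R x > 0" if x: "x \<in> {-1..1}" for x
      proof (rule ccontr)
        assume "\<not> poly R x > 0"
        then have neg: "poly R x < 0" using Rnz[OF x] by linarith
        then have "x < 1" using True x by (cases "x = 1") auto
        then obtain y where "x < y" "y < 1" "poly R y = 0" using poly_IVT_pos[OF _ neg True] by blast
        then show False using Rnz[of y] x by auto
      qed
      then show ?thesis by auto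
    next
      case False
      then have R1: "poly R 1 < 0" using Rnz[of 1] by fastforce
      have "poly R x < 0" if x: "x \<in> {-1..1}" for x
      proof (rule ccontr)
        assume "\<not> poly R x < 0"
        then have pos: "poly R x > 0" using Rnz[OF x] by linarith
        then have "x < 1" using R1 x by (cases "x = 1") auto
        then obtain y where "x < y" "y < 1" "poly R y = 0" using poly_IVT_neg[OF _ pos R1] by blast
        then show False using Rnz[of y] x by auto
      qed
      then show ?thesis by auto
    qed
    then show False
    proof
      assume pos: "\<forall>x\<in>{-1..1}. poly R x > 0"
      have "P * s = 0"
      proof (rule J_zero[OF _ J0])
        fix x :: real assume x: "x \<in> {-1..1}"
        have "0 \<le> poly R x" using pos x by (simp add: less_imp_le)
        then show "0 \<le> poly (P * s) x" unfolding Ps by (intro mult_nonneg_nonneg sq)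
      qed
      then show False using Psnz by simp
    next
      assume neg: "\<forall>x\<in>{-1..1}. poly R x < 0"
      have "J (smult (-1) (P * s)) = 0" using J0 J_smult[of "-1" "P * s"] by simp
      then have "smult (-1) (P * s) = 0"
      proof (rule J_zero[rotated])
        fix x :: real assume x: "x \<in> {-1..1}"
        have "poly R x \<le> 0" using neg x by (simp add: less_imp_le)
        then have "poly (P * s) x \<le> 0" unfolding Ps by (intro mult_nonneg_nonpos sq)
        then show "0 \<le> poly (smult (-1) (P * s)) x" by simp
      qed
      then show False using Psnz by simp
    qed
  qed
  have "card Z = card Rt" using cZ cRt card_mono[OF fRt ZRt] by simp
  then have "Z = Rt" using card_subset_eq[OF fRt ZRt] by simp
  then show ?thesis using cZ cRt unfolding Z_def Rt_def P_def by (metis (mono_tags, lifting) le_antisym mem_Collect_eq)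
qed


context
  fixes N :: nat
  assumes N1: "N \<ge> 1"
begin

definition "xs = sorted_list_of_set {x. poly (legendre N) x = 0}"

lemma fin_roots: "finite {x. poly (legendre N) x = 0}"
  using poly_roots_finite[OF leg_nz] by blast

lemma len_xs: "length xs = N"
  unfolding xs_def using leg_roots[of N] fin_roots by simp

lemma dist_xs: "distinct xs" unfolding xs_def by simp

lemma set_xs: "set xs = {x. poly (legendre N) x = 0}" unfolding xs_def using fin_roots by simp

lemma node_eq: "i \<in> {1..N} \<Longrightarrow> gauss_node N i = xs ! (i - 1)"
  unfolding gauss_node_def xs_def by simp

lemma node_root: "i \<in> {1..N} \<Longrightarrow> poly (legendre N) (gauss_node N i) = 0"
proof -
  assume i: "i \<in> {1..N}"
  have "xs ! (i - 1) \<in> set xs" using i len_xs by (intro nth_mem) auto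
  then show ?thesis using node_eq[OF i] set_xs by auto
qed

lemma node_inj: "i \<in> {1..N} \<Longrightarrow> k \<in> {1..N} \<Longrightarrow> gauss_node N i = gauss_node N k \<Longrightarrow> i = k"
proof -
  assume i: "i \<in> {1..N}" and k: "k \<in> {1..N}" and e: "gauss_node N i = gauss_node N k"
  then have "xs ! (i - 1) = xs ! (k - 1)" using node_eq by simp
  then have "i - 1 = k - 1" using nth_eq_iff_index_eq[OF dist_xs] i k len_xs by auto
  then show "i = k" using i k by auto
qed

lemma node_inj_on: "inj_on (gauss_node N) {1..N}"
  using node_inj by (auto intro: inj_onI)

definition lp :: "nat \<Rightarrow> real poly" where
  "lp j = (\<Prod>k\<in>{1..N} - {j}. smult (1 / (gauss_node N j - gauss_node N k)) [:- gauss_node N k, 1:])"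

lemma poly_lp: "poly (lp j) t = (\<Prod>k\<in>{1..N} - {j}. (t - gauss_node N k) / (gauss_node N j - gauss_node N k))"
  unfolding lp_def poly_prod by (intro prod.cong) (simp_all add: divide_inverse algebra_simps)

lemma weight_J: "gauss_weight N j = J (lp j)"
proof -
  have "poly (lp j) = (\<lambda>t. \<Prod>k\<in>{1..N} - {j}. (t - gauss_node N k) / (gauss_node N j - gauss_node N k))"
    using poly_lp by (simp add: fun_eq_iff)
  then show ?thesis unfolding gauss_weight_def J_def by simp
qed

lemma deg_lp: "j \<in> {1..N} \<Longrightarrow> degree (lp j) < N"
proof -
  assume j: "j \<in> {1..N}"
  have "degree (lp j) \<le> sum (degree \<circ> (\<lambda>k. smult (1 / (gauss_node N j - gauss_node N k)) [:- gauss_node N k, 1:])) ({1..N} - {j})"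
    unfolding lp_def by (rule degree_prod_sum_le) simp
  also have "\<dots> \<le> (\<Sum>k\<in>{1..N} - {j}. 1)"
  proof (intro sum_mono)
    fix k
    have "degree (smult (1 / (gauss_node N j - gauss_node N k)) [:- gauss_node N k, 1:]) \<le> degree [:- gauss_node N k, 1:]"
      by (rule degree_smult_le)
    then show "(degree \<circ> (\<lambda>k. smult (1 / (gauss_node N j - gauss_node N k)) [:- gauss_node N k, 1:])) k \<le> 1"
      by simp
  qed
  also have "\<dots> = N - 1" using j by simp
  finally show ?thesis using N1 by simp
qed

lemma lp_node: "i \<in> {1..N} \<Longrightarrow> j \<in> {1..N} \<Longrightarrow> poly (lp j) (gauss_node N i) = (if i = j then 1 else 0)"
proof -
  assume i: "i \<in> {1..N}" and j: "j \<in> {1..N}"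
  show ?thesis
  proof (cases "i = j")
    case True
    have "poly (lp j) (gauss_node N i) = (\<Prod>k\<in>{1..N} - {j}. 1)"
      unfolding poly_lp True
    proof (intro prod.cong refl)
      fix k assume k: "k \<in> {1..N} - {j}"
      then have "gauss_node N j \<noteq> gauss_node N k" using node_inj j by blast
      then show "(gauss_node N j - gauss_node N k) / (gauss_node N j - gauss_node N k) = 1" by simp
    qed
    then show ?thesis using True by simp
  next
    case False
    have "i \<in> {1..N} - {j}" using i False by simp
    then have "poly (lp j) (gauss_node N i) = 0"
      unfolding poly_lp by (intro prod_zero) auto
    then show ?thesis using False by simp
  qed
qed

lemma interp: "degree f < N \<Longrightarrow> f = (\<Sum>j\<in>{1..N}. smult (poly f (gauss_node N j)) (lp j))"
proof -
  assume df: "degree f < N"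
  show ?thesis
  proof (rule poly_eqI_degree[of "gauss_node N ` {1..N}"])
    fix x assume "x \<in> gauss_node N ` {1..N}"
    then obtain i where i: "i \<in> {1..N}" "x = gauss_node N i" by blast
    have "poly (\<Sum>j\<in>{1..N}. smult (poly f (gauss_node N j)) (lp j)) x
        = (\<Sum>j\<in>{1..N}. (if i = j then poly f (gauss_node N j) else 0))"
      unfolding poly_sum i(2)
    proof (intro sum.cong refl)
      fix k assume "k \<in> {1..N}"
      then show "poly (smult (poly f (gauss_node N k)) (lp k)) (gauss_node N i) = (if i = k then poly f (gauss_node N k) else 0)"
        using lp_node[OF i(1) \<open>k \<in> {1..N}\<close>] by simp
    qed
    also have "\<dots> = poly f x" using i by (simp add: sum.delta)
    finally show "poly f x = poly (\<Sum>j\<in>{1..N}. smult (poly f (gauss_node N j)) (lp j)) x" by simp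
  next
    show "degree f < card (gauss_node N ` {1..N})" using df card_image[OF node_inj_on] by simp
  next
    have "degree (\<Sum>j\<in>{1..N}. smult (poly f (gauss_node N j)) (lp j)) \<le> N - 1"
    proof (rule degree_sum_le)
      fix k assume k: "k \<in> {1..N}"
      have "degree (smult (poly f (gauss_node N k)) (lp k)) \<le> degree (lp k)" by (rule degree_smult_le)
      then show "degree (smult (poly f (gauss_node N k)) (lp k)) \<le> N - 1" using deg_lp[OF k] by simp
    qed simp
    then show "degree (\<Sum>j\<in>{1..N}. smult (poly f (gauss_node N j)) (lp j)) < card (gauss_node N ` {1..N})"
      using card_image[OF node_inj_on] N1 by simp
  qed
qed

lemma weight_sum: "(\<Sum>j\<in>{1..N}. gauss_weight N j) = 2"
proof -
  have "(1::real poly) = (\<Sum>j\<in>{1..N}. smult (poly 1 (gauss_node N j)) (lp j))"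
    using N1 by (intro interp) simp
  then have "(1::real poly) = (\<Sum>j\<in>{1..N}. lp j)" by simp
  moreover have "J (\<Sum>j\<in>{1..N}. lp j) = (\<Sum>j\<in>{1..N}. J (lp j))" by (rule J_sum) simp
  ultimately have "J 1 = (\<Sum>j\<in>{1..N}. J (lp j))" by simp
  then show ?thesis using J_1 weight_J by simp
qed

lemma weight_nonneg: "j \<in> {1..N} \<Longrightarrow> gauss_weight N j \<ge> 0"
proof -
  assume j: "j \<in> {1..N}"
  define P where "P = legendre N"
  define sq where "sq = lp j * lp j"
  define g where "g = sq div P"
  define r where "r = sq mod P"
  have Pnz: "P \<noteq> 0" unfolding P_def by (rule leg_nz)
  have dP: "degree P = N" unfolding P_def by (rule leg_degree)
  have sqe: "sq = g * P + r" unfolding g_def r_def by simp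
  have dr: "degree r < N"
    using degree_mod_less[OF Pnz, of sq] N1 dP unfolding r_def by auto
  have dsq: "degree sq \<le> 2 * N - 2"
  proof -
    have "degree sq \<le> degree (lp j) + degree (lp j)" unfolding sq_def by (rule degree_mult_le)
    then show ?thesis using deg_lp[OF j] by simp
  qed
  have dg: "degree g < N"
  proof (cases "g = 0")
    case True then show ?thesis using N1 by simp
  next
    case False
    have dgP: "degree (g * P) = degree g + N" using False Pnz dP by (simp add: degree_mult_eq)
    then have "degree r < degree (g * P)" using dr by simp
    then have "degree sq = degree (g * P)" unfolding sqe by (rule degree_add_eq_left)
    then show ?thesis using dgP dsq N1 by simp
  qed
  have J1: "J (P * g) = 0" unfolding P_def using dg by (rule leg_orth_deg)
  have rint: "r = (\<Sum>k\<in>{1..N}. smult (poly r (gauss_node N k)) (lp k))" using dr by (rule interp)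
  have rk: "poly r (gauss_node N k) = (if k = j then 1 else 0)" if k: "k \<in> {1..N}" for k
  proof -
    have "poly P (gauss_node N k) = 0" unfolding P_def using k by (rule node_root)
    then have "poly r (gauss_node N k) = poly sq (gauss_node N k)"
      using sqe by (metis add_cancel_right_left mult_zero_right poly_add poly_mult)
    also have "\<dots> = (if k = j then 1 else 0)" unfolding sq_def using lp_node[OF k j] by simp
    finally show ?thesis .
  qed
  have "J r = (\<Sum>k\<in>{1..N}. poly r (gauss_node N k) * J (lp k))"
    by (subst rint) (simp add: J_sum J_smult)
  also have "\<dots> = (\<Sum>k\<in>{1..N}. (if k = j then J (lp k) else 0))"
    by (intro sum.cong) (auto simp: rk)
  also have "\<dots> = J (lp j)" using j by simp
  finally have Jr: "J r = J (lp j)" .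
  have "J sq = J (P * g) + J r" unfolding sqe by (simp add: J_add mult.commute)
  then have "J sq = gauss_weight N j" using J1 Jr weight_J by simp
  moreover have "J sq \<ge> 0" unfolding sq_def by (rule J_nonneg) simp
  ultimately show ?thesis by simp
qed

end

lemma gauss_weights: "N \<ge> 1 \<Longrightarrow> (\<forall>j\<in>{1..N}. gauss_weight N j \<ge> 0) \<and> (\<Sum>j\<in>{1..N}. gauss_weight N j) = 2"
  using weight_nonneg weight_sum by blast


lemma absum: "finite I \<Longrightarrow> (\<forall>k\<in>I. \<bar>v k\<bar> \<le> V) \<Longrightarrow> \<bar>\<Sum>k\<in>I. e k * v k\<bar> \<le> (\<Sum>k\<in>I. \<bar>e k\<bar>) * (V::real)"
proof -
  assume f: "finite I" and b: "\<forall>k\<in>I. \<bar>v k\<bar> \<le> V"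
  have "\<bar>\<Sum>k\<in>I. e k * v k\<bar> \<le> (\<Sum>k\<in>I. \<bar>e k * v k\<bar>)" by (rule sum_abs)
  also have "\<dots> \<le> (\<Sum>k\<in>I. \<bar>e k\<bar> * V)"
    by (intro sum_mono) (use b in \<open>auto simp: abs_mult intro: mult_left_mono\<close>)
  also have "\<dots> = (\<Sum>k\<in>I. \<bar>e k\<bar>) * V" by (simp add: sum_distrib_right)
  finally show ?thesis .
qed

locale lin =
  fixes N n :: nat and A :: "nat \<Rightarrow> nat \<Rightarrow> nat \<Rightarrow> real" and E D :: "nat \<Rightarrow> nat \<Rightarrow> real"
  assumes N1: "N \<ge> 1" and n1: "n \<ge> 1"
    and Erow: "\<forall>i\<in>{1..N}. (\<Sum>k\<in>{1..N}. \<bar>E i k\<bar>) \<le> 2"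
    and Arow: "\<forall>i\<in>{1..N}. \<forall>r<n. (\<Sum>c<n. \<bar>A i r c\<bar>) \<le> 1/4"
    and ED: "\<forall>i\<in>{1..N}. \<forall>j\<in>{1..N}. (\<Sum>k\<in>{1..N}. E i k * D k j) = (if i = j then 1 else 0)"
    and DE: "\<forall>i\<in>{1..N}. \<forall>j\<in>{1..N}. (\<Sum>k\<in>{1..N}. D i k * E k j) = (if i = j then 1 else 0)"

context lin
begin

definition "AX Y k r = (\<Sum>c<n. A k r c * Y k c)"

lemma AX_bound: "k \<in> {1..N} \<Longrightarrow> r < n \<Longrightarrow> (\<forall>c<n. \<bar>Y k c\<bar> \<le> M) \<Longrightarrow> M \<ge> 0 \<Longrightarrow> \<bar>AX Y k r\<bar> \<le> M / 4"
proof -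
  assume k: "k \<in> {1..N}" and r: "r < n" and b: "\<forall>c<n. \<bar>Y k c\<bar> \<le> M" and M: "M \<ge> 0"
  have "\<bar>AX Y k r\<bar> \<le> (\<Sum>c<n. \<bar>A k r c\<bar>) * M" unfolding AX_def by (rule absum) (use b in auto)
  also have "\<dots> \<le> 1/4 * M" using Arow k r M by (intro mult_right_mono) auto
  finally show ?thesis by simp
qed

lemma rep:
  assumes sol: "\<forall>i\<in>{1..N}. \<forall>r<n. (\<Sum>j\<in>{1..N}. D i j * Y j r) - AX Y i r = p i r"
    and j: "j \<in> {1..N}" and r: "r < n"
  shows "Y j r = (\<Sum>k\<in>{1..N}. E j k * (p k r + AX Y k r))"
proof -
  have "(\<Sum>k\<in>{1..N}. E j k * (p k r + AX Y k r)) = (\<Sum>k\<in>{1..N}. E j k * (\<Sum>l\<in>{1..N}. D k l * Y l r))"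
    using sol r by (intro sum.cong refl) (metis add.commute diff_add_cancel)
  also have "\<dots> = (\<Sum>l\<in>{1..N}. (\<Sum>k\<in>{1..N}. E j k * D k l) * Y l r)"
    by (simp add: sum_distrib_left sum_distrib_right mult.assoc) (rule sum.swap)
  also have "\<dots> = (\<Sum>l\<in>{1..N}. (if j = l then Y l r else 0))"
    using ED j by (intro sum.cong refl) auto
  also have "\<dots> = Y j r" using j by simp
  finally show ?thesis by simp
qed

lemma apriori:
  assumes sol: "\<forall>i\<in>{1..N}. \<forall>r<n. (\<Sum>j\<in>{1..N}. D i j * Y j r) - AX Y i r = p i r"
    and pb: "\<forall>i\<in>{1..N}. \<forall>r<n. \<bar>p i r\<bar> \<le> B"
  shows "\<forall>j\<in>{1..N}. \<forall>r<n. \<bar>Y j r\<bar> \<le> 4 * B"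
proof -
  define S where "S = {1..N} \<times> {..<n}"
  have fS: "finite S" unfolding S_def by auto
  have "(1, 0) \<in> S" unfolding S_def using N1 n1 by auto
  then have neS: "S \<noteq> {}" by auto
  define M where "M = Max ((\<lambda>(j, r). \<bar>Y j r\<bar>) ` S)"
  have Mge: "\<bar>Y j r\<bar> \<le> M" if "j \<in> {1..N}" "r < n" for j r
    unfolding M_def by (rule Max_ge) (use fS that in \<open>auto simp: S_def\<close>)
  have "M \<in> (\<lambda>(j, r). \<bar>Y j r\<bar>) ` S" unfolding M_def using fS neS by (intro Max_in) auto
  then obtain j r where jr: "j \<in> {1..N}" "r < n" "M = \<bar>Y j r\<bar>" unfolding S_def by auto
  have M0: "M \<ge> 0" using jr by simp
  have B0: "B \<ge> 0" using pb N1 n1 by (meson abs_ge_zero atLeastAtMost_iff le_refl less_le_trans order_trans zero_less_one)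
  have "M = \<bar>\<Sum>k\<in>{1..N}. E j k * (p k r + AX Y k r)\<bar>" using rep[OF sol jr(1,2)] jr(3) by simp
  also have "\<dots> \<le> (\<Sum>k\<in>{1..N}. \<bar>E j k\<bar>) * (B + M / 4)"
  proof (rule absum)
    show "\<forall>k\<in>{1..N}. \<bar>p k r + AX Y k r\<bar> \<le> B + M / 4"
    proof
      fix k assume k: "k \<in> {1..N}"
      have "\<bar>AX Y k r\<bar> \<le> M / 4" using AX_bound[OF k jr(2)] Mge k M0 by auto
      moreover have "\<bar>p k r\<bar> \<le> B" using pb k jr(2) by auto
      ultimately show "\<bar>p k r + AX Y k r\<bar> \<le> B + M / 4" by linarith
    qed
  qed simp
  also have "\<dots> \<le> 2 * (B + M / 4)" using Erow jr(1) B0 M0 by (intro mult_right_mono) auto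
  finally have "M \<le> 4 * B" by simp
  then show ?thesis using Mge by (meson order_trans)
qed

definition "T p Y = (\<lambda>j r. \<Sum>k\<in>{1..N}. E j k * (p k r + AX Y k r))"
definition "Xs p m = ((T p) ^^ m) (\<lambda>_ _. 0)"

lemma T_contr:
  assumes d: "\<forall>k\<in>{1..N}. \<forall>c<n. \<bar>Y k c - Z k c\<bar> \<le> \<delta>" and j: "j \<in> {1..N}" and r: "r < n"
  shows "\<bar>T p Y j r - T p Z j r\<bar> \<le> \<delta> / 2"
proof -
  have d0: "\<delta> \<ge> 0" using d N1 n1 by (metis abs_ge_zero atLeastAtMost_iff le_refl order_trans zero_less_one less_le_trans)
  have eq: "T p Y j r - T p Z j r = (\<Sum>k\<in>{1..N}. E j k * AX (\<lambda>k c. Y k c - Z k c) k r)"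
    unfolding T_def AX_def sum_subtractf[symmetric] by (intro sum.cong refl) (simp add: algebra_simps sum_subtractf)
  have "\<bar>\<Sum>k\<in>{1..N}. E j k * AX (\<lambda>k c. Y k c - Z k c) k r\<bar> \<le> (\<Sum>k\<in>{1..N}. \<bar>E j k\<bar>) * (\<delta> / 4)"
  proof (rule absum)
    show "\<forall>k\<in>{1..N}. \<bar>AX (\<lambda>k c. Y k c - Z k c) k r\<bar> \<le> \<delta> / 4"
      using AX_bound[OF _ r _ d0] d by auto
  qed simp
  also have "\<dots> \<le> 2 * (\<delta> / 4)" using Erow j d0 by (intro mult_right_mono) auto
  finally show ?thesis using eq by simp
qed

lemma Xs_diff:
  assumes pb: "\<forall>i\<in>{1..N}. \<forall>r<n. \<bar>p i r\<bar> \<le> B"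
  shows "\<forall>j\<in>{1..N}. \<forall>r<n. \<bar>Xs p (Suc m) j r - Xs p m j r\<bar> \<le> 2 * B * (1/2)^m"
proof (induction m)
  case 0
  show ?case
  proof (intro ballI allI impI)
    fix j r assume j: "j \<in> {1..N}" and r: "r < n"
    have "Xs p (Suc 0) j r - Xs p 0 j r = (\<Sum>k\<in>{1..N}. E j k * p k r)"
      unfolding Xs_def T_def AX_def by simp
    also have "\<bar>\<dots>\<bar> \<le> (\<Sum>k\<in>{1..N}. \<bar>E j k\<bar>) * B" by (rule absum) (use pb r in auto)
    also have "\<dots> \<le> 2 * B"
    proof -
      have "B \<ge> 0" using pb N1 n1 by (metis abs_ge_zero atLeastAtMost_iff le_refl order_trans zero_less_one less_le_trans)
      then show ?thesis using Erow j by (intro mult_right_mono) auto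
    qed
    finally show "\<bar>Xs p (Suc 0) j r - Xs p 0 j r\<bar> \<le> 2 * B * (1/2)^0" by simp
  qed
next
  case (Suc m)
  show ?case
  proof (intro ballI allI impI)
    fix j r assume j: "j \<in> {1..N}" and r: "r < n"
    have "Xs p (Suc (Suc m)) = T p (Xs p (Suc m))" "Xs p (Suc m) = T p (Xs p m)" unfolding Xs_def by simp_all
    then have "\<bar>Xs p (Suc (Suc m)) j r - Xs p (Suc m) j r\<bar> = \<bar>T p (Xs p (Suc m)) j r - T p (Xs p m) j r\<bar>"
      by metis
    also have "\<dots> \<le> 2 * B * (1/2)^m / 2" by (rule T_contr[OF Suc.IH j r])
    finally show "\<bar>Xs p (Suc (Suc m)) j r - Xs p (Suc m) j r\<bar> \<le> 2 * B * (1/2)^(Suc m)" by simp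
  qed
qed

lemma exist:
  assumes pb: "\<forall>i\<in>{1..N}. \<forall>r<n. \<bar>p i r\<bar> \<le> B"
  shows "\<exists>X. \<forall>i\<in>{1..N}. \<forall>r<n. (\<Sum>j\<in>{1..N}. D i j * X j r) - AX X i r = p i r"
proof -
  define g where "g j r i = Xs p (Suc i) j r - Xs p i j r" for j r i
  define X where "X j r = suminf (g j r)" for j r
  have conv: "(\<lambda>m. Xs p m j r) \<longlonglongrightarrow> X j r" if j: "j \<in> {1..N}" and r: "r < n" for j r
  proof -
    have "summable (g j r)"
    proof (rule summable_comparison_test')
      show "summable (\<lambda>i. 2 * B * (1/2::real)^i)" by (intro summable_mult summable_geometric) simp
      show "norm (g j r i) \<le> 2 * B * (1/2)^i" for i using Xs_diff[OF pb, of i] j r unfolding g_def by auto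
    qed
    then have "(\<lambda>m. \<Sum>i<m. g j r i) \<longlonglongrightarrow> X j r" unfolding X_def by (rule summable_LIMSEQ)
    moreover have "(\<Sum>i<m. g j r i) = Xs p m j r" for m
      unfolding g_def using sum_lessThan_telescope[of "\<lambda>i. Xs p i j r" m] by (simp add: Xs_def)
    ultimately show ?thesis by simp
  qed
  have fixp: "X j r = T p X j r" if j: "j \<in> {1..N}" and r: "r < n" for j r
  proof -
    have l1: "(\<lambda>m. Xs p (Suc m) j r) \<longlonglongrightarrow> X j r" using conv[OF j r] by (rule LIMSEQ_Suc)
    have e: "(\<lambda>m. Xs p (Suc m) j r) = (\<lambda>m. \<Sum>k\<in>{1..N}. E j k * (p k r + (\<Sum>c<n. A k r c * Xs p m k c)))"
      unfolding Xs_def T_def AX_def by simp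
    have l2: "(\<lambda>m. \<Sum>k\<in>{1..N}. E j k * (p k r + (\<Sum>c<n. A k r c * Xs p m k c))) \<longlonglongrightarrow>
        (\<Sum>k\<in>{1..N}. E j k * (p k r + (\<Sum>c<n. A k r c * X k c)))"
    proof (rule tendsto_sum)
      fix k assume k: "k \<in> {1..N}"
      have "(\<lambda>m. \<Sum>c<n. A k r c * Xs p m k c) \<longlonglongrightarrow> (\<Sum>c<n. A k r c * X k c)"
      proof (rule tendsto_sum)
        fix c assume "c \<in> {..<n}"
        then have "(\<lambda>m. Xs p m k c) \<longlonglongrightarrow> X k c" using conv k by simp
        then show "(\<lambda>m. A k r c * Xs p m k c) \<longlonglongrightarrow> A k r c * X k c" by (rule tendsto_mult_left)
      qed
      then have "(\<lambda>m. p k r + (\<Sum>c<n. A k r c * Xs p m k c)) \<longlonglongrightarrow> p k r + (\<Sum>c<n. A k r c * X k c)"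
        by (rule tendsto_add[OF tendsto_const])
      then show "(\<lambda>m. E j k * (p k r + (\<Sum>c<n. A k r c * Xs p m k c))) \<longlonglongrightarrow> E j k * (p k r + (\<Sum>c<n. A k r c * X k c))"
        by (rule tendsto_mult_left)
    qed
    have "X j r = (\<Sum>k\<in>{1..N}. E j k * (p k r + (\<Sum>c<n. A k r c * X k c)))"
      using l1 l2 unfolding e by (rule LIMSEQ_unique)
    then show ?thesis unfolding T_def AX_def by simp
  qed
  have "(\<Sum>j\<in>{1..N}. D i j * X j r) - AX X i r = p i r" if i: "i \<in> {1..N}" and r: "r < n" for i r
  proof -
    have "(\<Sum>j\<in>{1..N}. D i j * X j r) = (\<Sum>j\<in>{1..N}. D i j * (\<Sum>k\<in>{1..N}. E j k * (p k r + AX X k r)))"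
      using fixp r by (intro sum.cong refl) (simp add: T_def)
    also have "\<dots> = (\<Sum>k\<in>{1..N}. (\<Sum>j\<in>{1..N}. D i j * E j k) * (p k r + AX X k r))"
      by (simp add: sum_distrib_left sum_distrib_right mult.assoc) (rule sum.swap)
    also have "\<dots> = (\<Sum>k\<in>{1..N}. (if i = k then p k r + AX X k r else 0))"
      using DE i by (intro sum.cong refl) auto
    also have "\<dots> = p i r + AX X i r" using i by simp
    finally show ?thesis by simp
  qed
  then show ?thesis by blast
qed

end


theorem lemma4p1:
  fixes N n :: nat
    and A :: "nat \<Rightarrow> nat \<Rightarrow> nat \<Rightarrow> real"
    and q :: "nat \<Rightarrow> real"
    and p :: "nat \<Rightarrow> nat \<Rightarrow> real"
  assumes "N \<ge> 1" and "n \<ge> 1"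
    and A_norm: "\<forall>i\<in>{1..N}. mat_inf_norm {..<n} (A i) \<le> 1 / 4"
    and D_inv: "\<exists>E :: nat \<Rightarrow> nat \<Rightarrow> real.
          (\<forall>i\<in>{1..N}. \<forall>j\<in>{1..N}.
              (\<Sum>k\<in>{1..N}. gauss_diff N i k * E k j) = (if i = j then 1 else 0)
            \<and> (\<Sum>k\<in>{1..N}. E i k * gauss_diff N k j) = (if i = j then 1 else 0))
          \<and> mat_inf_norm {1..N} E \<le> 2"
  shows "\<exists>X :: nat \<Rightarrow> nat \<Rightarrow> real.
    (\<forall>i\<in>{1..N}. \<forall>r<n.
        (\<Sum>j\<in>{1..N}. gauss_diff N i j * X j r) - (\<Sum>c<n. A i r c * X i c) = p i r)
    \<and> (\<forall>r<n. X (N + 1) r - (\<Sum>j\<in>{1..N}. gauss_weight N j * (\<Sum>c<n. A j r c * X j c)) = q r)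
    \<and> (\<forall>Y :: nat \<Rightarrow> nat \<Rightarrow> real.
         ((\<forall>i\<in>{1..N}. \<forall>r<n.
             (\<Sum>j\<in>{1..N}. gauss_diff N i j * Y j r) - (\<Sum>c<n. A i r c * Y i c) = p i r)
          \<and> (\<forall>r<n. Y (N + 1) r - (\<Sum>j\<in>{1..N}. gauss_weight N j * (\<Sum>c<n. A j r c * Y j c)) = q r))
         \<longrightarrow> (\<forall>j\<in>{1..N+1}. \<forall>r<n. Y j r = X j r))
    \<and> (\<forall>j\<in>{1..N+1}.
         vec_inf_norm n (X j)
           \<le> 4 * Max ((\<lambda>(i, r). \<bar>p i r\<bar>) ` ({1..N} \<times> {..<n})) + vec_inf_norm n q)"
proof -
  note N1 = \<open>N \<ge> 1\<close> and n1 = \<open>n \<ge> 1\<close>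
  obtain E where Einv: "\<forall>i\<in>{1..N}. \<forall>j\<in>{1..N}.
              (\<Sum>k\<in>{1..N}. gauss_diff N i k * E k j) = (if i = j then 1 else 0)
            \<and> (\<Sum>k\<in>{1..N}. E i k * gauss_diff N k j) = (if i = j then 1 else 0)"
      and En: "mat_inf_norm {1..N} E \<le> 2" using D_inv by blast
  have Erow: "\<forall>i\<in>{1..N}. (\<Sum>k\<in>{1..N}. \<bar>E i k\<bar>) \<le> 2"
  proof
    fix i assume "i \<in> {1..N}"
    then have "(\<Sum>k\<in>{1..N}. \<bar>E i k\<bar>) \<le> mat_inf_norm {1..N} E"
      unfolding mat_inf_norm_def by (intro Max_ge) auto
    then show "(\<Sum>k\<in>{1..N}. \<bar>E i k\<bar>) \<le> 2" using En by simp
  qed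
  have Arow: "\<forall>i\<in>{1..N}. \<forall>r<n. (\<Sum>c<n. \<bar>A i r c\<bar>) \<le> 1/4"
  proof (intro ballI allI impI)
    fix i r assume i: "i \<in> {1..N}" and r: "r < n"
    then have "(\<Sum>c<n. \<bar>A i r c\<bar>) \<le> mat_inf_norm {..<n} (A i)"
      unfolding mat_inf_norm_def by (intro Max_ge) auto
    then show "(\<Sum>c<n. \<bar>A i r c\<bar>) \<le> 1/4" using A_norm i by fastforce
  qed
  interpret L: lin N n A E "gauss_diff N"
    by unfold_locales (use N1 n1 Erow Arow Einv in auto)
  define Pm where "Pm = Max ((\<lambda>(i, r). \<bar>p i r\<bar>) ` ({1..N} \<times> {..<n}))"
  have pb: "\<forall>i\<in>{1..N}. \<forall>r<n. \<bar>p i r\<bar> \<le> Pm"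
  proof (intro ballI allI impI)
    fix i r assume "i \<in> {1..N}" "r < n"
    then have "(i, r) \<in> {1..N} \<times> {..<n}" by simp
    then show "\<bar>p i r\<bar> \<le> Pm" unfolding Pm_def by (intro Max_ge) force+
  qed
  have Pm0: "Pm \<ge> 0" using pb N1 n1 by (metis abs_ge_zero atLeastAtMost_iff le_refl order_trans zero_less_one less_le_trans)
  obtain X0 where sol: "\<forall>i\<in>{1..N}. \<forall>r<n. (\<Sum>j\<in>{1..N}. gauss_diff N i j * X0 j r) - L.AX X0 i r = p i r"
    using L.exist[OF pb] by blast
  have bd: "\<forall>j\<in>{1..N}. \<forall>r<n. \<bar>X0 j r\<bar> \<le> 4 * Pm" by (rule L.apriori[OF sol pb])
  have wts: "\<forall>j\<in>{1..N}. gauss_weight N j \<ge> 0" "(\<Sum>j\<in>{1..N}. gauss_weight N j) = 2"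
    using gauss_weights[OF N1] by auto
  define X where "X j r = (if j = N + 1 then q r + (\<Sum>j\<in>{1..N}. gauss_weight N j * (\<Sum>c<n. A j r c * X0 j c)) else X0 j r)" for j r
  have XX0: "X j = X0 j" if "j \<in> {1..N}" for j using that unfolding X_def by (auto simp: fun_eq_iff)
  have G1: "\<forall>i\<in>{1..N}. \<forall>r<n.
        (\<Sum>j\<in>{1..N}. gauss_diff N i j * X j r) - (\<Sum>c<n. A i r c * X i c) = p i r"
    using sol XX0 unfolding L.AX_def by simp
  have G2: "\<forall>r<n. X (N + 1) r - (\<Sum>j\<in>{1..N}. gauss_weight N j * (\<Sum>c<n. A j r c * X j c)) = q r"
    using XX0 unfolding X_def by simp
  have G3: "\<forall>Y :: nat \<Rightarrow> nat \<Rightarrow> real.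
         ((\<forall>i\<in>{1..N}. \<forall>r<n.
             (\<Sum>j\<in>{1..N}. gauss_diff N i j * Y j r) - (\<Sum>c<n. A i r c * Y i c) = p i r)
          \<and> (\<forall>r<n. Y (N + 1) r - (\<Sum>j\<in>{1..N}. gauss_weight N j * (\<Sum>c<n. A j r c * Y j c)) = q r))
         \<longrightarrow> (\<forall>j\<in>{1..N+1}. \<forall>r<n. Y j r = X j r)"
  proof (intro allI impI)
    fix Y :: "nat \<Rightarrow> nat \<Rightarrow> real"
    assume "(\<forall>i\<in>{1..N}. \<forall>r<n.
             (\<Sum>j\<in>{1..N}. gauss_diff N i j * Y j r) - (\<Sum>c<n. A i r c * Y i c) = p i r)
          \<and> (\<forall>r<n. Y (N + 1) r - (\<Sum>j\<in>{1..N}. gauss_weight N j * (\<Sum>c<n. A j r c * Y j c)) = q r)"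
    then have Y1: "\<forall>i\<in>{1..N}. \<forall>r<n.
             (\<Sum>j\<in>{1..N}. gauss_diff N i j * Y j r) - (\<Sum>c<n. A i r c * Y i c) = p i r"
      and Y2: "\<forall>r<n. Y (N + 1) r - (\<Sum>j\<in>{1..N}. gauss_weight N j * (\<Sum>c<n. A j r c * Y j c)) = q r" by auto
    define Z where "Z j r = Y j r - X0 j r" for j r
    have hom: "\<forall>i\<in>{1..N}. \<forall>r<n. (\<Sum>j\<in>{1..N}. gauss_diff N i j * Z j r) - L.AX Z i r = (\<lambda>_ _. 0) i r"
    proof (intro ballI allI impI)
      fix i r assume i: "i \<in> {1..N}" and r: "r < n"
      have "(\<Sum>j\<in>{1..N}. gauss_diff N i j * Z j r) - L.AX Z i r
          = ((\<Sum>j\<in>{1..N}. gauss_diff N i j * Y j r) - (\<Sum>c<n. A i r c * Y i c))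
          - ((\<Sum>j\<in>{1..N}. gauss_diff N i j * X0 j r) - L.AX X0 i r)"
        unfolding Z_def L.AX_def by (simp add: algebra_simps sum_subtractf)
      also have "\<dots> = 0" using Y1 sol i r by simp
      finally show "(\<Sum>j\<in>{1..N}. gauss_diff N i j * Z j r) - L.AX Z i r = (\<lambda>_ _. 0) i r" by simp
    qed
    have "\<forall>j\<in>{1..N}. \<forall>r<n. \<bar>Z j r\<bar> \<le> 4 * 0" by (rule L.apriori[OF hom]) simp
    then have YX0: "\<forall>j\<in>{1..N}. \<forall>r<n. Y j r = X0 j r" unfolding Z_def by auto
    show "\<forall>j\<in>{1..N+1}. \<forall>r<n. Y j r = X j r"
    proof (intro ballI allI impI)
      fix j r assume j: "j \<in> {1..N+1}" and r: "r < n"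
      show "Y j r = X j r"
      proof (cases "j = N + 1")
        case True
        have SS: "(\<Sum>j\<in>{1..N}. gauss_weight N j * (\<Sum>c<n. A j r c * Y j c))
            = (\<Sum>j\<in>{1..N}. gauss_weight N j * (\<Sum>c<n. A j r c * X0 j c))"
        proof (intro sum.cong refl)
          fix k assume k: "k \<in> {1..N}"
          have "(\<Sum>c<n. A k r c * Y k c) = (\<Sum>c<n. A k r c * X0 k c)"
          proof (intro sum.cong refl)
            fix c assume "c \<in> {..<n}"
            then have "Y k c = X0 k c" using YX0 k by simp
            then show "A k r c * Y k c = A k r c * X0 k c" by simp
          qed
          then show "gauss_weight N k * (\<Sum>c<n. A k r c * Y k c) = gauss_weight N k * (\<Sum>c<n. A k r c * X0 k c)"
            by simp
        qed
        have "Y (N + 1) r = q r + (\<Sum>j\<in>{1..N}. gauss_weight N j * (\<Sum>c<n. A j r c * Y j c))"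
          using Y2 r by (simp add: algebra_simps)
        also have "\<dots> = X (N + 1) r" unfolding SS X_def by simp
        finally show ?thesis using True by simp
      next
        case False
        then have "j \<in> {1..N}" using j by auto
        then show ?thesis using YX0 r XX0 by simp
      qed
    qed
  qed
  have qn: "\<bar>q r\<bar> \<le> vec_inf_norm n q" if "r < n" for r
    unfolding vec_inf_norm_def using that by (intro Max_ge) auto
  have qn0: "vec_inf_norm n q \<ge> 0" using qn[of 0] n1 by (meson abs_ge_zero order_trans less_le_trans zero_less_one)
  have G4: "\<forall>j\<in>{1..N+1}. vec_inf_norm n (X j) \<le> 4 * Pm + vec_inf_norm n q"
  proof
    fix j assume j: "j \<in> {1..N+1}"
    have "\<bar>X j r\<bar> \<le> 4 * Pm + vec_inf_norm n q" if r: "r < n" for r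
    proof (cases "j = N + 1")
      case True
      have "\<bar>\<Sum>j\<in>{1..N}. gauss_weight N j * (\<Sum>c<n. A j r c * X0 j c)\<bar>
           \<le> (\<Sum>j\<in>{1..N}. \<bar>gauss_weight N j\<bar>) * Pm"
      proof (rule absum)
        show "\<forall>k\<in>{1..N}. \<bar>\<Sum>c<n. A k r c * X0 k c\<bar> \<le> Pm"
          using L.AX_bound[OF _ r _, of _ X0 "4 * Pm"] bd Pm0 unfolding L.AX_def by auto
      qed simp
      also have "(\<Sum>j\<in>{1..N}. \<bar>gauss_weight N j\<bar>) = 2" using wts by simp
      finally have "\<bar>\<Sum>j\<in>{1..N}. gauss_weight N j * (\<Sum>c<n. A j r c * X0 j c)\<bar> \<le> 2 * Pm" by simp
      then have "\<bar>X j r\<bar> \<le> \<bar>q r\<bar> + 2 * Pm" unfolding X_def using True by simp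
      then show ?thesis using qn[OF r] Pm0 by simp
    next
      case False
      then have "j \<in> {1..N}" using j by auto
      then show ?thesis using bd r qn0 XX0 by fastforce
    qed
    then show "vec_inf_norm n (X j) \<le> 4 * Pm + vec_inf_norm n q"
    proof -
      have "0 \<in> {..<n}" using n1 by simp
      then have ne: "(\<lambda>r. \<bar>X j r\<bar>) ` {..<n} \<noteq> {}" by blast
      show ?thesis unfolding vec_inf_norm_def[of n "X j"] Max_le_iff[OF finite_imageI[OF finite_lessThan] ne]
        using \<open>\<And>r. r < n \<Longrightarrow> \<bar>X j r\<bar> \<le> 4 * Pm + vec_inf_norm n q\<close> by auto
    qed
  qed
  show ?thesis using G1 G2 G3 G4 unfolding Pm_def by blast
qed


end
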